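(* Let $c,d>0$ and $g(x)=xF(c,d;c+d;x)$ for $x\in(0,1)$. The function $G(u)=\log g\!\left(\frac{e^u}{1+e^u}\right)$ is concave on $(-\infty,\infty)$ if and only if $\frac1c+\frac1d\ge1$.
   Context: $F(a,b;c;x)$ is the Gaussian hypergeometric function $\sum_{n\ge0}\frac{(a)_n(b)_n}{(c)_n}\frac{x^n}{n!}$ ($|x|<1$), with $(a)_n=a(a+1)\cdots(a+n-1)$, $(a)_0=1$. *)

theory Defs
  imports "HOL-Analysis.Analysis"
begin

text \<open>Gaussian hypergeometric function F(a,b;c;x) = sum_n (a)_n (b)_n / (c)_n * x^n / n!,
  intended for |x| < 1.\<close>
definition hyp2F1 :: "real \<Rightarrow> real \<Rightarrow> real \<Rightarrow> real \<Rightarrow> real" where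
  "hyp2F1 a b c x = (\<Sum>n. pochhammer a n * pochhammer b n / pochhammer c n * x ^ n / fact n)"

end

theory Submission
  imports Defs
begin

locale hg =
  fixes c d :: real
  assumes cpos: "c > 0" and dpos: "d > 0"
begin

definition s where "s = c + d"
definition p where "p = c * d"

definition a :: "nat \<Rightarrow> real" where
  "a n = pochhammer c n * pochhammer d n / pochhammer (c+d) n / fact n"

lemma spos: "s > 0" using cpos dpos by (simp add: s_def)
lemma ppos: "p > 0" using cpos dpos by (simp add: p_def)

lemma a_pos: "a n > 0"
  using cpos dpos by (auto simp: a_def intro!: divide_pos_pos mult_pos_pos pochhammer_pos)

lemma a0: "a 0 = 1" by (simp add: a_def)

lemma a_Suc: "a (Suc n) = a n * ((c + n) * (d + n)) / ((s + n) * (n + 1))"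
proof -
  have "pochhammer (c+d) n > 0" using cpos dpos by (intro pochhammer_pos) simp
  moreover have "c + d + n > 0" using cpos dpos by simp
  ultimately show ?thesis
    by (simp add: a_def s_def pochhammer_rec' field_simps)
qed

lemma a_rec: "(real n + 1) * (s + n) * a (Suc n) = (c + n) * (d + n) * a n"
proof -
  have Y: "(s + n) * (n + 1) > 0" using spos by simp
  have "(real n + 1) * (s + n) * a (Suc n) = ((s + n) * (n + 1)) * (a n * ((c + n) * (d + n)) / ((s + n) * (n + 1)))"
    by (simp add: a_Suc algebra_simps)
  also have "\<dots> = a n * ((c + n) * (d + n))" using Y spos by (simp add: ac_simps add_pos_nonneg)
  finally show ?thesis by (simp add: algebra_simps)
qed

lemma a1: "a 1 = p / s"
  using a_Suc[of 0] by (simp add: a0 p_def)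

lemma a_dec: assumes "p \<le> s" shows "a (Suc n) \<le> a n"
proof -
  have "(c + n) * (d + n) \<le> (s + n) * (n + 1)"
    using assms by (simp add: p_def s_def algebra_simps)
  moreover have "(s + n) * (n + 1) > 0" using spos by simp
  ultimately have "((c + n) * (d + n)) / ((s + n) * (n + 1)) \<le> 1" by simp
  then show ?thesis using a_pos[of n] unfolding a_Suc
    by (metis mult.right_neutral mult_left_mono times_divide_eq_right less_eq_real_def)
qed

lemma summ_a: assumes "\<bar>z\<bar> < 1" shows "summable (\<lambda>n. a n * z ^ n)"
proof (rule summable_ratio_test[of "\<bar>z\<bar>" "nat \<lceil>p\<rceil>"])
  show "\<bar>z\<bar> < 1" by fact
  fix n assume n: "nat \<lceil>p\<rceil> \<le> n"
  then have "p \<le> n" by linarith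
  then have "(c + n) * (d + n) \<le> (s + n) * (n + 1)"
    using spos by (simp add: p_def s_def algebra_simps)
  moreover have "(s + n) * (n + 1) > 0" using spos by simp
  ultimately have r: "((c + n) * (d + n)) / ((s + n) * (n + 1)) \<le> 1" by simp
  have "norm (a (Suc n) * z ^ Suc n) = a n * (((c + n) * (d + n)) / ((s + n) * (n + 1))) * (\<bar>z\<bar> * \<bar>z\<bar>^n)"
    using a_pos[of n] cpos dpos spos by (simp add: a_Suc abs_mult power_abs)
  also have "\<dots> \<le> a n * 1 * (\<bar>z\<bar> * \<bar>z\<bar>^n)"
    using r a_pos[of n] by (intro mult_right_mono mult_left_mono) auto
  also have "\<dots> = \<bar>z\<bar> * norm (a n * z ^ n)"
    using a_pos[of n] by (simp add: abs_mult power_abs)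
  finally show "norm (a (Suc n) * z ^ Suc n) \<le> \<bar>z\<bar> * norm (a n * z ^ n)" .
qed

definition FF where "FF x = (\<Sum>n. a n * x ^ n)"
definition F1 where "F1 x = (\<Sum>n. diffs a n * x ^ n)"
definition F2 where "F2 x = (\<Sum>n. diffs (diffs a) n * x ^ n)"

lemma summ_a1: assumes "\<bar>z\<bar> < 1" shows "summable (\<lambda>n. diffs a n * z ^ n)"
  using termdiff_converges[of z 1 a] summ_a assms by auto

lemma summ_a2: assumes "\<bar>z\<bar> < 1" shows "summable (\<lambda>n. diffs (diffs a) n * z ^ n)"
  using termdiff_converges[of z 1 "diffs a"] summ_a1 assms by auto

lemma FF_deriv: assumes "\<bar>x\<bar> < 1" shows "(FF has_real_derivative F1 x) (at x)"
  unfolding FF_def[abs_def] F1_def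
  by (rule termdiffs_strong'[of 1]) (use summ_a assms in auto)

lemma F1_deriv: assumes "\<bar>x\<bar> < 1" shows "(F1 has_real_derivative F2 x) (at x)"
  unfolding F1_def[abs_def] F2_def
  by (rule termdiffs_strong'[of 1]) (use summ_a1 assms in auto)

lemma FF_sums: "\<bar>x\<bar> < 1 \<Longrightarrow> (\<lambda>n. a n * x ^ n) sums FF x"
  unfolding FF_def using summ_a by (simp add: summable_sums)
lemma F1_sums: "\<bar>x\<bar> < 1 \<Longrightarrow> (\<lambda>n. diffs a n * x ^ n) sums F1 x"
  unfolding F1_def using summ_a1 by (simp add: summable_sums)
lemma F2_sums: "\<bar>x\<bar> < 1 \<Longrightarrow> (\<lambda>n. diffs (diffs a) n * x ^ n) sums F2 x"
  unfolding F2_def using summ_a2 by (simp add: summable_sums)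

lemma FF0: "FF 0 = 1" unfolding FF_def by (simp add: a0)
lemma F10: "F1 0 = p / s" unfolding F1_def using a1 by (simp add: diffs_def)

lemma shift_sums:
  fixes g :: "nat \<Rightarrow> real"
  assumes "(\<lambda>n. g (Suc n) * x ^ n) sums S" "g 0 = 0"
  shows "(\<lambda>n. g n * x ^ n) sums (x * S)"
proof -
  have "(\<lambda>n. x * (g (Suc n) * x ^ n)) sums (x * S)" by (rule sums_mult[OF assms(1)])
  then have "(\<lambda>n. g (Suc n) * x ^ (Suc n)) sums (x * S)" by (simp add: ac_simps)
  then show ?thesis using sums_Suc_iff[of "\<lambda>n. g n * x ^ n"] assms(2) by simp
qed

lemma FF_pos: assumes "0 \<le> x" "x < 1" shows "FF x \<ge> 1"
proof -
  have "sum (\<lambda>n. a n * x ^ n) {..<1} \<le> FF x"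
    unfolding FF_def using summ_a[of x] assms a_pos
    by (intro sum_le_suminf) (auto intro!: mult_nonneg_nonneg simp: less_imp_le[OF a_pos])
  then show ?thesis by (simp add: a0)
qed

lemma F1_pos: assumes "0 \<le> x" "x < 1" shows "F1 x \<ge> p / s"
proof -
  have "sum (\<lambda>n. diffs a n * x ^ n) {..<1} \<le> F1 x"
    unfolding F1_def using summ_a1[of x] assms a_pos
    by (intro sum_le_suminf) (auto simp: diffs_def less_imp_le[OF a_pos] intro!: mult_nonneg_nonneg)
  then show ?thesis using a1 by (simp add: diffs_def)
qed



lemma ODE: assumes "\<bar>x\<bar> < 1"
  shows "x * (1 - x) * F2 x + (s - (s + 1) * x) * F1 x - p * FF x = 0"
proof -
  define g1 where "g1 m = real m * (real m + 1) * a (Suc m)" for m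
  define g2 where "g2 m = real m * (real m - 1) * a m" for m
  define g3 where "g3 m = real m * a m" for m
  have e1: "g1 (Suc n) = diffs (diffs a) n" for n by (simp add: g1_def diffs_def algebra_simps)
  have e2: "g2 (Suc n) = g1 n" for n by (simp add: g1_def g2_def algebra_simps)
  have e3: "g3 (Suc n) = diffs a n" for n by (simp add: g3_def diffs_def)
  have s1: "(\<lambda>n. g1 n * x ^ n) sums (x * F2 x)"
    by (rule shift_sums) (simp_all only: e1 F2_sums[OF assms], simp add: g1_def)
  have s2: "(\<lambda>n. g2 n * x ^ n) sums (x * (x * F2 x))"
    by (rule shift_sums) (simp_all only: e2 s1, simp add: g2_def)
  have s3: "(\<lambda>n. g3 n * x ^ n) sums (x * F1 x)"
    by (rule shift_sums) (simp_all only: e3 F1_sums[OF assms], simp add: g3_def)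
  have "(\<lambda>n. g1 n * x ^ n - g2 n * x ^ n + s * (diffs a n * x ^ n) - (s + 1) * (g3 n * x ^ n) - p * (a n * x ^ n))
     sums (x * F2 x - x * (x * F2 x) + s * F1 x - (s + 1) * (x * F1 x) - p * FF x)"
    by (rule sums_diff[OF sums_diff[OF sums_add[OF sums_diff[OF s1 s2] sums_mult[OF F1_sums[OF assms]]] sums_mult[OF s3]] sums_mult[OF FF_sums[OF assms]]])
  moreover have "g1 n * x ^ n - g2 n * x ^ n + s * (diffs a n * x ^ n) - (s + 1) * (g3 n * x ^ n) - p * (a n * x ^ n) = 0" for n
  proof -
    have "g1 n - g2 n + s * diffs a n - (s + 1) * g3 n - p * a n
        = real n * (real n + 1) * a (Suc n) - real n * (real n - 1) * a n + (c+d) * ((1 + real n) * a (Suc n))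
          - ((c+d) + 1) * (real n * a n) - (c*d) * a n"
      unfolding g1_def g2_def g3_def diffs_def p_def s_def by (simp only: of_nat_Suc)
    also have "\<dots> = (real n + 1) * ((c+d) + real n) * a (Suc n) - (c + real n) * (d + real n) * a n"
      by (simp add: algebra_simps)
    also have "\<dots> = (real n + 1) * (s + n) * a (Suc n) - (c + n) * (d + n) * a n"
      by (simp add: s_def)
    also have "\<dots> = 0" by (simp add: a_rec)
    finally have "g1 n - g2 n + s * diffs a n - (s + 1) * g3 n - p * a n = 0" .
    then have "(g1 n - g2 n + s * diffs a n - (s + 1) * g3 n - p * a n) * x ^ n = 0" by simp
    moreover have "g1 n * x ^ n - g2 n * x ^ n + s * (diffs a n * x ^ n) - (s + 1) * (g3 n * x ^ n) - p * (a n * x ^ n)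
        = (g1 n - g2 n + s * diffs a n - (s + 1) * g3 n - p * a n) * x ^ n" by (simp add: algebra_simps)
    ultimately show ?thesis by simp
  qed
  ultimately have "(\<lambda>n. 0) sums (x * F2 x - x * (x * F2 x) + s * F1 x - (s + 1) * (x * F1 x) - p * FF x)"
    by (simp only:)
  then have "0 = x * F2 x - x * (x * F2 x) + s * F1 x - (s + 1) * (x * F1 x) - p * FF x"
    by (rule sums_unique2[OF sums_zero])
  moreover have "x * (1 - x) * F2 x + (s - (s + 1) * x) * F1 x - p * FF x
     = x * F2 x - x * (x * F2 x) + s * F1 x - (s + 1) * (x * F1 x) - p * FF x"
    by (simp add: algebra_simps)
  ultimately show ?thesis by metis
qed


lemma HH_le_aux: assumes "p \<le> s" "0 \<le> x" "x < 1"
  shows "(1 - x) * F1 x \<le> FF x"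
proof -
  have ax: "\<bar>x\<bar> < 1" using assms by simp
  define g3 where "g3 m = real m * a m" for m
  have e3: "g3 (Suc n) = diffs a n" for n by (simp add: g3_def diffs_def)
  have s3: "(\<lambda>n. g3 n * x ^ n) sums (x * F1 x)"
    by (rule shift_sums) (simp_all only: e3 F1_sums[OF ax], simp add: g3_def)
  have "(\<lambda>n. a n * x ^ n - diffs a n * x ^ n + g3 n * x ^ n) sums (FF x - F1 x + x * F1 x)"
    by (rule sums_add[OF sums_diff[OF FF_sums[OF ax] F1_sums[OF ax]] s3])
  moreover have nn: "a n * x ^ n - diffs a n * x ^ n + g3 n * x ^ n \<ge> 0" for n
  proof -
    have "a n * x ^ n - diffs a n * x ^ n + g3 n * x ^ n = (real n + 1) * (a n - a (Suc n)) * x ^ n"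
      by (simp add: g3_def diffs_def algebra_simps)
    also have "\<dots> \<ge> 0" using a_dec[OF assms(1), of n] assms by (intro mult_nonneg_nonneg) auto
    finally show ?thesis .
  qed
  ultimately have "0 \<le> FF x - F1 x + x * F1 x" by (intro sums_le[OF nn sums_zero])
  moreover have "FF x - F1 x + x * F1 x = FF x - (1 - x) * F1 x" by (simp add: algebra_simps)
  ultimately have "FF x - (1 - x) * F1 x \<ge> 0" by metis
  then show ?thesis by simp
qed

end

context hg begin

definition HH where "HH x = (1 - x) * (FF x + x * F1 x) / FF x"
definition HD where "HD x = ((- (FF x + x * F1 x) + (1 - x) * (F1 x + (F1 x + x * F2 x))) * FF x
   - (1 - x) * (FF x + x * F1 x) * F1 x) / (FF x * FF x)"
definition Rf where "Rf x h = (1 - x) * ((p - s + 1) * x + s - 2 + (3 - s) * h) - h ^ 2"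
definition Rx where "Rx x h = - ((p - s + 1) * x + s - 2 + (3 - s) * h) + (1 - x) * (p - s + 1)"
definition Rh where "Rh x h = (1 - x) * (3 - s) - 2 * h"

lemma HH_deriv: assumes "\<bar>x\<bar> < 1" "FF x \<noteq> 0" shows "(HH has_real_derivative HD x) (at x)"
proof -
  have d1: "(FF has_real_derivative F1 x) (at x)" by (rule FF_deriv[OF assms(1)])
  have d2: "(F1 has_real_derivative F2 x) (at x)" by (rule F1_deriv[OF assms(1)])
  have dn: "((\<lambda>x. (1 - x) * (FF x + x * F1 x)) has_real_derivative
      (- (FF x + x * F1 x) + (1 - x) * (F1 x + (F1 x + x * F2 x)))) (at x)"
    by (rule derivative_eq_intros d1 d2 refl | simp)+
  have "((\<lambda>x. (1 - x) * (FF x + x * F1 x) / FF x) has_real_derivative HD x) (at x)"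
    unfolding HD_def using DERIV_divide[OF dn d1 assms(2)] .
  then show ?thesis unfolding HH_def[abs_def] .
qed

lemma HH_R: assumes "0 < x" "x < 1" shows "x * (1 - x) * HD x = Rf x (HH x)"
proof -
  define F where "F = FF x"
  define G1 where "G1 = F1 x"
  define G2 where "G2 = F2 x"
  have Fp: "F > 0" using FF_pos[of x] assms by (simp add: F_def)
  have E: "x * (1 - x) * G2 + (s - (s + 1) * x) * G1 - p * F = 0"
    using ODE[of x] assms by (simp add: F_def G1_def G2_def)
  have E': "(1 - x) * x * G2 = p * F - (s - (s + 1) * x) * G1" using E by (simp add: algebra_simps)
  have "( -(F + x * G1) + (1 - x) * (G1 + (G1 + x * G2))) = -(F + x * G1) + 2 * (1 - x) * G1 + (1 - x) * x * G2"
    by (simp add: algebra_simps)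
  also have "\<dots> = -(F + x * G1) + 2 * (1 - x) * G1 + (p * F - (s - (s + 1) * x) * G1)" by (simp only: E')
  finally have N: "( -(F + x * G1) + (1 - x) * (G1 + (G1 + x * G2))) = -(F + x * G1) + 2 * (1 - x) * G1 + (p * F - (s - (s + 1) * x) * G1)" .
  have "x * (1 - x) * ((( -(F + x * G1) + (1 - x) * (G1 + (G1 + x * G2))) * F - (1 - x) * (F + x * G1) * G1) / (F * F))
     = (1 - x) * ((p - s + 1) * x + s - 2 + (3 - s) * ((1 - x) * (F + x * G1) / F)) - ((1 - x) * (F + x * G1) / F)^2"
    unfolding N using Fp by (simp add: field_simps power2_eq_square)
  then show ?thesis unfolding HD_def HH_def Rf_def F_def G1_def G2_def .
qed

lemma K_deriv: assumes "\<bar>x\<bar> < 1" "FF x \<noteq> 0"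
  shows "((\<lambda>x. Rf x (HH x)) has_real_derivative (Rx x (HH x) + Rh x (HH x) * HD x)) (at x)"
proof -
  have d: "(HH has_real_derivative HD x) (at x)" by (rule HH_deriv[OF assms])
  show ?thesis unfolding Rf_def[abs_def] Rx_def Rh_def
    by (rule derivative_eq_intros d refl | simp)+ (simp add: algebra_simps power2_eq_square)
qed

lemma HH0: "HH 0 = 1" by (simp add: HH_def FF0)
lemma HD0: "HD 0 = p / s - 1" by (simp add: HD_def FF0 F10)

lemma HH_gt: assumes "0 < x" "x < 1" shows "HH x > 1 - x"
proof -
  have F: "FF x \<ge> 1" using FF_pos assms by simp
  have "F1 x \<ge> p / s" using F1_pos assms by simp
  moreover have "p / s > 0" using ppos spos by simp
  ultimately have "x * F1 x > 0" using assms by simp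
  then have "(1 - x) * FF x < (1 - x) * (FF x + x * F1 x)" using assms by simp
  then show ?thesis using F unfolding HH_def by (simp add: field_simps)
qed

lemma HH_le1: assumes "p \<le> s" "0 \<le> x" "x < 1" shows "HH x \<le> 1"
proof -
  have F: "FF x \<ge> 1" using FF_pos assms by simp
  have "(1 - x) * F1 x \<le> FF x" by (rule HH_le_aux[OF assms])
  then have "x * ((1 - x) * F1 x) \<le> x * FF x" using assms by (intro mult_left_mono) auto
  then have "(1 - x) * (FF x + x * F1 x) \<le> FF x" by (simp add: algebra_simps)
  then show ?thesis using F unfolding HH_def by (simp add: field_simps)
qed

lemma Rx_neg: assumes "p \<le> s" "0 < x" "x < 1" "Rf x h = 0" "h > 1 - x"
  shows "Rx x h < 0"
proof -
  define B where "B = (p - s + 1) * x + s - 2 + (3 - s) * h"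
  have hb: "(1 - x) * B = h ^ 2" using assms(4) by (simp add: Rf_def B_def)
  have x1: "1 - x > 0" using assms by simp
  have "(1 - x) * ((1 - x) * (p - s + 1)) \<le> (1 - x) * (1 - x)"
  proof (cases "p - s + 1 \<ge> 0")
    case True
    then show ?thesis using x1 assms(1) by (intro mult_left_mono) (auto intro: mult_left_le)
  next
    case False
    then have "(1 - x) * (p - s + 1) < 0" using x1 by (simp add: mult_pos_neg)
    then show ?thesis using x1 by (smt (verit) mult_pos_neg zero_le_mult_iff)
  qed
  also have "\<dots> < h ^ 2" using assms(5) x1 by (simp add: power2_eq_square mult_strict_mono)
  also have "\<dots> = (1 - x) * B" by (simp add: hb)
  finally have "(1 - x) * ((1 - x) * (p - s + 1)) < (1 - x) * B" .
  then have "(1 - x) * (p - s + 1) < B" using x1 by simp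
  then show ?thesis by (simp add: Rx_def B_def)
qed

end

context hg begin

lemma FF_ne: "0 \<le> x \<Longrightarrow> x < 1 \<Longrightarrow> FF x \<noteq> 0"
  using FF_pos[of x] by simp

lemma HD_nonpos: assumes ps: "p \<le> s" and y: "0 < y" "y < 1" shows "HD y \<le> 0"
proof (rule ccontr)
  assume "\<not> HD y \<le> 0"
  then have HDy: "HD y > 0" by simp
  define K where "K x = Rf x (HH x)" for x
  have Kd: "(K has_real_derivative (Rx x (HH x) + Rh x (HH x) * HD x)) (at x)" if "0 \<le> x" "x < 1" for x
    unfolding K_def[abs_def] using K_deriv[of x] FF_ne[of x] that by simp
  have KHD: "K x = x * (1 - x) * HD x" if "0 < x" "x < 1" for x
    using HH_R[OF that] by (simp add: K_def)
  have Ky: "K y > 0" using KHD[OF y] HDy y by simp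
  have Kcont: "continuous_on {a..b} K" if "0 \<le> a" "b < 1" for a b
  proof (rule DERIV_atLeastAtMost_imp_continuous_on)
    fix x assume "a \<le> x" "x \<le> b"
    then have "0 \<le> x" "x < 1" using that by linarith+
    then show "\<exists>y. (K has_real_derivative y) (at x)" using Kd by blast
  qed
  show False
  proof (cases "\<exists>t. 0 < t \<and> t < y \<and> K t \<le> 0")
    case True
    then obtain t where t: "0 < t" "t < y" "K t \<le> 0" by blast
    define S where "S = {t..y} \<inter> K -` {..0}"
    have cS: "closed S" unfolding S_def
      by (rule continuous_closed_preimage) (use Kcont[of t y] t y in auto)
    have "t \<in> S" using t by (simp add: S_def)
    then have neS: "S \<noteq> {}" by blast
    have bS: "bdd_above S" by (auto simp: S_def bdd_above_def)
    define x1 where "x1 = Sup S"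
    have x1S: "x1 \<in> S" unfolding x1_def by (rule closed_contains_Sup[OF neS bS cS])
    have upper: "z \<le> x1" if "z \<in> S" for z unfolding x1_def by (rule cSup_upper[OF that bS])
    have x1t: "t \<le> x1" "x1 \<le> y" "K x1 \<le> 0" using x1S by (auto simp: S_def)
    have x1y: "x1 < y" using x1t Ky by (cases "x1 = y") auto
    have Kx10: "K x1 = 0"
    proof (rule ccontr)
      assume "K x1 \<noteq> 0"
      then have "K x1 < 0" using x1t by simp
      have cc: "continuous_on {x1..y} K" using Kcont[of x1 y] x1t t y by simp
      obtain z where z: "x1 \<le> z" "z \<le> y" "K z = 0"
        using IVT'[OF less_imp_le[OF \<open>K x1 < 0\<close>] less_imp_le[OF Ky] less_imp_le[OF x1y] cc] by blast
      then have "z \<in> S" using x1t by (auto simp: S_def)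
      then have "z \<le> x1" by (rule upper)
      then have "z = x1" using z by simp
      then show False using z \<open>K x1 \<noteq> 0\<close> by simp
    qed
    have x1pos: "0 < x1" "x1 < 1" using x1t t y x1y by auto
    have "HD x1 = 0" using KHD[OF x1pos] Kx10 x1pos by simp
    moreover have "Rx x1 (HH x1) < 0"
      using Rx_neg[OF ps x1pos _ HH_gt[OF x1pos]] Kx10 by (simp add: K_def)
    ultimately have "Rx x1 (HH x1) + Rh x1 (HH x1) * HD x1 < 0" by simp
    then obtain \<delta> where \<delta>: "\<delta> > 0" "\<And>h. h > 0 \<Longrightarrow> h < \<delta> \<Longrightarrow> K x1 > K (x1 + h)"
      using DERIV_neg_dec_right[OF Kd[of x1]] x1pos by force
    obtain m where m: "m \<le> y - x1" "m \<le> \<delta>" "m > 0"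
      using \<delta>(1) x1y by (intro that[of "min \<delta> (y - x1)"]) auto
    define h where "h = m / 2"
    have h1: "h > 0" using m unfolding h_def by linarith
    have h2: "h < \<delta>" using m unfolding h_def by linarith
    have h3: "x1 + h \<le> y" using m unfolding h_def by linarith
    note h = h1 h2 h3
    have "K (x1 + h) < 0" using \<delta>(2)[OF h(1,2)] Kx10 by simp
    then have "x1 + h \<in> S" using h x1t by (auto simp: S_def)
    then have "x1 + h \<le> x1" by (rule upper)
    then show False using h by simp
  next
    case False
    then have Kpos: "K t > 0" if "0 < t" "t \<le> y" for t
      using that Ky by (cases "t = y") (auto simp: not_le)
    have HDpos: "HD t > 0" if "0 < t" "t \<le> y" for t
    proof -
      have "t * (1 - t) * HD t > 0" using Kpos[OF that] KHD[of t] that y by simp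
      moreover have "t * (1 - t) > 0" using that y by simp
      ultimately show ?thesis by (simp add: zero_less_mult_iff)
    qed
    have Hd: "(HH has_real_derivative HD x) (at x)" if "0 \<le> x" "x < 1" for x
      using HH_deriv[of x] FF_ne[of x] that by simp
    have inc: "HH a < HH b" if "0 < a" "a < b" "b \<le> y" for a b
    proof (rule DERIV_pos_imp_increasing[OF that(2)])
      fix x assume "a \<le> x" "x \<le> b"
      then have x: "0 < x" "x \<le> y" "0 \<le> x" "x < 1" using that y by linarith+
      show "\<exists>y. DERIV HH x :> y \<and> y > 0" using Hd[OF x(3,4)] HDpos[OF x(1,2)] by blast
    qed
    have lim: "(HH \<longlongrightarrow> HH 0) (at_right 0)"
      using DERIV_isCont[OF Hd[of 0]] by (simp add: isCont_def filterlim_at_split)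
    have ev: "eventually (\<lambda>t. HH t \<le> HH (y / 2)) (at_right 0)"
    proof -
      have "eventually (\<lambda>t. t \<in> {0<..<y/2}) (at_right (0::real))"
        using y by (intro eventually_at_right_real) simp
      then show ?thesis
        by eventually_elim (use inc y in \<open>auto intro: less_imp_le\<close>)
    qed
    have "HH 0 \<le> HH (y / 2)" by (rule tendsto_upperbound[OF lim ev]) simp
    moreover have "HH (y / 2) < HH y" using inc[of "y/2" y] y by simp
    moreover have "HH y \<le> 1" using HH_le1[OF ps] y by simp
    ultimately show False using HH0 by simp
  qed
qed

lemma HH_mono: assumes ps: "p \<le> s" and xy: "0 < x" "x \<le> y" "y < 1" shows "HH y \<le> HH x"
proof (rule DERIV_nonpos_imp_nonincreasing[OF xy(2)])
  fix t assume t: "x \<le> t" "t \<le> y"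
  then have t1: "0 < t" "t < 1" using xy by auto
  show "\<exists>y. DERIV HH t :> y \<and> y \<le> 0"
    using HH_deriv[of t] FF_ne[of t] HD_nonpos[OF ps t1] t1 by auto
qed

lemma necessity: assumes mono: "\<And>x y. 0 < x \<Longrightarrow> x \<le> y \<Longrightarrow> y < 1 \<Longrightarrow> HH y \<le> HH x"
  shows "p \<le> s"
proof (rule ccontr)
  assume "\<not> p \<le> s"
  then have "HD 0 > 0" using spos by (simp add: HD0 field_simps)
  have Hd: "(HH has_real_derivative HD x) (at x)" if "0 \<le> x" "x < 1" for x
    using HH_deriv[of x] FF_ne[of x] that by simp
  obtain \<delta> where \<delta>: "\<delta> > 0" "\<And>h. h > 0 \<Longrightarrow> h < \<delta> \<Longrightarrow> HH 0 < HH (0 + h)"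
    using DERIV_pos_inc_right[OF Hd[of 0] \<open>HD 0 > 0\<close>] by force
  define h where "h = min \<delta> 1 / 2"
  have h: "h > 0" "h < \<delta>" "h < 1" using \<delta> by (auto simp: h_def)
  have gt: "HH 0 < HH h" using \<delta>(2)[OF h(1,2)] by simp
  have lim: "(HH \<longlongrightarrow> HH 0) (at_right 0)"
    using DERIV_isCont[OF Hd[of 0]] by (simp add: isCont_def filterlim_at_split)
  have ev: "eventually (\<lambda>t. HH h \<le> HH t) (at_right 0)"
  proof -
    have "eventually (\<lambda>t. t \<in> {0<..<h}) (at_right (0::real))"
      using h by (intro eventually_at_right_real) simp
    then show ?thesis
      by eventually_elim (use mono h in auto)
  qed
  have "HH h \<le> HH 0" by (rule tendsto_lowerbound[OF lim ev]) simp
  then show False using gt by simp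
qed

end

context hg begin

definition sig :: "real \<Rightarrow> real" where "sig u = exp u / (1 + exp u)"

lemma sig_bounds: "0 < sig u" "sig u < 1"
  by (simp_all add: sig_def add_pos_pos)

lemma sig_mono: assumes "u \<le> v" shows "sig u \<le> sig v"
proof -
  have "exp u \<le> exp v" using assms by simp
  then have "exp u * (1 + exp v) \<le> exp v * (1 + exp u)" by (simp add: algebra_simps)
  then show ?thesis unfolding sig_def by (simp add: field_simps add_pos_pos)
qed

lemma sig_surj: assumes "0 < x" "x < 1" shows "sig (ln (x / (1 - x))) = x"
  using assms by (simp add: sig_def field_simps)

lemma sig_deriv: "(sig has_real_derivative sig u * (1 - sig u)) (at u)"
proof -
  have ne: "1 + exp u \<noteq> 0" using exp_gt_zero[of u] by linarith
  have "((\<lambda>u. exp u / (1 + exp u)) has_real_derivative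
     (exp u * (1 + exp u) - exp u * exp u) / ((1 + exp u) * (1 + exp u))) (at u)"
    by (rule DERIV_divide) (auto intro!: derivative_eq_intros simp: ne)
  moreover have "(exp u * (1 + exp u) - exp u * exp u) / ((1 + exp u) * (1 + exp u)) = sig u * (1 - sig u)"
    unfolding sig_def using ne by (simp add: field_simps)
  ultimately show ?thesis unfolding sig_def[abs_def] by simp
qed

lemma G_deriv: "((\<lambda>u. ln (sig u * FF (sig u))) has_real_derivative HH (sig u)) (at u)"
proof -
  define x where "x = sig u"
  have x: "0 < x" "x < 1" using sig_bounds by (auto simp: x_def)
  have F: "FF x \<ge> 1" using FF_pos x by simp
  have dg: "((\<lambda>x. x * FF x) has_real_derivative (1 * FF x + F1 x * x)) (at x)"
    by (rule DERIV_mult[OF DERIV_ident FF_deriv]) (use x in simp)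
  have pos: "x * FF x > 0" using x F by simp
  have dl: "(ln has_real_derivative 1 / (x * FF x)) (at (x * FF x))"
    by (rule DERIV_ln_divide[OF pos])
  have d1: "((\<lambda>u. sig u * FF (sig u)) has_real_derivative (1 * FF x + F1 x * x) * (x * (1 - x))) (at u)"
    using DERIV_chain2[OF dg[unfolded x_def] sig_deriv] by (simp add: x_def)
  have d2: "((\<lambda>u. ln (sig u * FF (sig u))) has_real_derivative 1 / (x * FF x) * ((1 * FF x + F1 x * x) * (x * (1 - x)))) (at u)"
    using DERIV_chain2[OF dl[unfolded x_def] d1[unfolded x_def]] by (simp add: x_def)
  moreover have "1 / (x * FF x) * ((1 * FF x + F1 x * x) * (x * (1 - x))) = HH x"
    unfolding HH_def using x F by (simp add: field_simps)
  ultimately show ?thesis by (simp add: x_def)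
qed

end

lemma hyp_FF: assumes "c > 0" "d > 0" shows "hyp2F1 c d (c + d) x = hg.FF c d x"
proof -
  interpret hg c d using assms by unfold_locales
  show ?thesis unfolding hyp2F1_def FF_def a_def
    by (rule arg_cong[where f = suminf]) (simp add: fun_eq_iff field_simps)
qed

theorem mainTheorem5:
  fixes c d :: real
  assumes "c > 0" and "d > 0"
  shows "concave_on UNIV
           (\<lambda>u. ln ((\<lambda>x. x * hyp2F1 c d (c + d) x) (exp u / (1 + exp u))))
         \<longleftrightarrow> 1 / c + 1 / d \<ge> 1"
proof -
  interpret hg c d using assms by unfold_locales
  have fun_eq: "(\<lambda>u. ln ((\<lambda>x. x * hyp2F1 c d (c + d) x) (exp u / (1 + exp u))))
      = (\<lambda>u. ln (sig u * FF (sig u)))"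
    by (simp add: hyp_FF[OF assms] sig_def)
  have cd: "1 / c + 1 / d \<ge> 1 \<longleftrightarrow> p \<le> s"
    using assms by (simp add: p_def s_def field_simps)
  define G where "G u = ln (sig u * FF (sig u))" for u
  have dG: "((\<lambda>u. - G u) has_real_derivative - HH (sig u)) (at u)" for u
    unfolding G_def by (rule DERIV_minus[OF G_deriv])
  have "concave_on UNIV G \<longleftrightarrow> p \<le> s"
  proof
    assume conc: "concave_on UNIV G"
    then have conv: "convex_on UNIV (\<lambda>u. - G u)" by (simp add: concave_on_def)
    have m: "HH (sig v) \<le> HH (sig u)" if "u < v" for u v
    proof -
      have t1: "- G v - (- G u) \<ge> - HH (sig u) * (v - u)"
        by (rule convex_on_imp_above_tangent[OF conv]) (use dG in auto)
      have t2: "- G u - (- G v) \<ge> - HH (sig v) * (u - v)"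
        by (rule convex_on_imp_above_tangent[OF conv]) (use dG in auto)
      have "(v - u) * (HH (sig v) - HH (sig u)) \<le> 0" using t1 t2 by (simp add: algebra_simps)
      then show ?thesis using that by (simp add: mult_le_0_iff)
    qed
    show "p \<le> s"
    proof (rule necessity)
      fix x y :: real assume xy: "0 < x" "x \<le> y" "y < 1"
      show "HH y \<le> HH x"
      proof (cases "x = y")
        case False
        then have "ln (x / (1 - x)) < ln (y / (1 - y))" using xy by (simp add: field_simps)
        then have "HH (sig (ln (y / (1 - y)))) \<le> HH (sig (ln (x / (1 - x))))" by (rule m)
        then show ?thesis using xy by (simp add: sig_surj)
      qed simp
    qed
  next
    assume ps: "p \<le> s"
    have "convex_on UNIV (\<lambda>u. - G u)"
    proof (rule convex_on_realI)
      show "connected (UNIV :: real set)" by simp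
      show "((\<lambda>u. - G u) has_real_derivative - HH (sig u)) (at u)" for u by (rule dG)
      fix u v :: real assume "u \<le> v"
      then have "HH (sig v) \<le> HH (sig u)"
        using HH_mono[OF ps sig_bounds(1) sig_mono sig_bounds(2)] by blast
      then show "- HH (sig u) \<le> - HH (sig v)" by simp
    qed
    then show "concave_on UNIV G" by (simp add: concave_on_def)
  qed
  then show ?thesis unfolding fun_eq G_def[abs_def, symmetric] cd[symmetric] by simp
qed


end
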